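(* Let $\alpha,\beta,\gamma>-1$ be real numbers with $|\alpha-\gamma|<1$ and $\alpha+\beta\le -1$, and let $N\ge1$ be an integer. Let $\tilde H$ be the $N\times N$ matrix with entries \[ \tilde H_{jk}=\frac{\Gamma(j+k+\alpha+\beta+1)}{\Gamma(j+k+\gamma+\beta+2)},\qquad 1\le j,k\le N. \] Then $\tilde H$ is real, symmetric and positive semidefinite.
   Context: $\Gamma$ denotes the gamma function. $\tilde H$ is the trailing submatrix (rows and columns indexed from $1$) of the Hankel part of the conversion matrix from Jacobi $(\alpha,\beta)$ coefficients to Jacobi $(\gamma,\beta)$ coefficients. *)

theory Defs
  imports "HOL-Analysis.Analysis"
begin

definition Htilde :: "real \<Rightarrow> real \<Rightarrow> real \<Rightarrow> nat \<Rightarrow> nat \<Rightarrow> real" where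
  "Htilde \<alpha> \<beta> \<gamma> j k =
     Gamma (real (j + k) + \<alpha> + \<beta> + 1) / Gamma (real (j + k) + \<gamma> + \<beta> + 2)"

definition symmetric_mat :: "nat \<Rightarrow> (nat \<Rightarrow> nat \<Rightarrow> real) \<Rightarrow> bool" where
  "symmetric_mat N A \<longleftrightarrow> (\<forall>j\<in>{1..N}. \<forall>k\<in>{1..N}. A j k = A k j)"

definition psd_mat :: "nat \<Rightarrow> (nat \<Rightarrow> nat \<Rightarrow> real) \<Rightarrow> bool" where
  "psd_mat N A \<longleftrightarrow> (\<forall>x :: nat \<Rightarrow> real.
      (\<Sum>j=1..N. \<Sum>k=1..N. x j * A j k * x k) \<ge> 0)"

end

theory Submission
  imports Defs
begin

lemma Htilde_Beta:
  fixes \<alpha> \<beta> \<gamma> :: real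
  assumes "\<gamma> - \<alpha> + 1 > 0"
  shows "Htilde \<alpha> \<beta> \<gamma> j k = Beta (real (j+k) + (\<alpha>+\<beta>+1)) (\<gamma> - \<alpha> + 1) / Gamma (\<gamma> - \<alpha> + 1)"
proof -
  have g: "Gamma (\<gamma> - \<alpha> + 1) > 0" using assms by (rule Gamma_real_pos)
  have e: "real (j+k) + (\<alpha>+\<beta>+1) + (\<gamma> - \<alpha> + 1) = real (j + k) + \<gamma> + \<beta> + 2" by simp
  show ?thesis unfolding Htilde_def Beta_def e using g
    by (simp add: field_simps add.assoc)
qed

lemma quad_nonneg:
  fixes a d :: real and x :: "nat \<Rightarrow> real" and N :: nat
  assumes a: "a > -1" and d: "d > 0"
  shows "(\<Sum>j=1..N. \<Sum>k=1..N. x j * Beta (real (j+k) + a) d * x k) \<ge> 0"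
proof -
  have int: "((\<lambda>t. x j * x k * (t powr (real (j+k) + a - 1) * (1 - t) powr (d - 1)))
          has_integral (x j * Beta (real (j+k) + a) d * x k)) {0<..<1}"
    if "j \<in> {1..N}" "k \<in> {1..N}" for j k
  proof -
    have p: "real (j+k) + a > 0" using that a by auto
    have "((\<lambda>t. t powr (real (j+k) + a - 1) * (1 - t) powr (d - 1)) has_integral Beta (real (j+k) + a) d) {0<..<1}"
      using has_integral_Beta_real[OF p d] by (simp add: has_integral_Icc_iff_Ioo)
    from has_integral_mult_right[OF this, of "x j * x k"] show ?thesis by (simp add: mult_ac)
  qed
  have I: "((\<lambda>t. \<Sum>j=1..N. \<Sum>k=1..N. x j * x k * (t powr (real (j+k) + a - 1) * (1 - t) powr (d - 1)))
          has_integral (\<Sum>j=1..N. \<Sum>k=1..N. x j * Beta (real (j+k) + a) d * x k)) {0<..<1}"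
    by (intro has_integral_sum int) auto
  show ?thesis
  proof (rule has_integral_nonneg[OF I])
    fix t :: real assume t: "t \<in> {0<..<1}"
    have pw: "t powr (real (j+k) + a - 1) = t ^ j * t ^ k * t powr (a - 1)" for j k
    proof -
      have "t powr (real (j+k) + a - 1) = t powr (real j) * t powr (real k) * t powr (a - 1)"
        using t by (simp add: powr_add[symmetric] algebra_simps)
      also have "\<dots> = t ^ j * t ^ k * t powr (a - 1)" using t by (simp add: powr_realpow)
      finally show ?thesis .
    qed
    have "(\<Sum>j=1..N. \<Sum>k=1..N. x j * x k * (t powr (real (j+k) + a - 1) * (1 - t) powr (d - 1)))
        = (t powr (a - 1) * (1 - t) powr (d - 1)) * ((\<Sum>j=1..N. x j * t ^ j) * (\<Sum>j=1..N. x j * t ^ j))"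
      unfolding pw sum_product sum_distrib_left by (intro sum.cong refl) (simp add: sum_distrib_left mult_ac)
    also have "\<dots> \<ge> 0" using t by (intro mult_nonneg_nonneg zero_le_square) auto
    finally show "0 \<le> (\<Sum>j=1..N. \<Sum>k=1..N. x j * x k * (t powr (real (j+k) + a - 1) * (1 - t) powr (d - 1)))" .
  qed
qed

theorem mainTheorem10:
  fixes \<alpha> \<beta> \<gamma> :: real and N :: nat
  assumes "\<alpha> > -1" and "\<beta> > -1" and "\<gamma> > -1"
    and "\<bar>\<alpha> - \<gamma>\<bar> < 1" and "\<alpha> + \<beta> \<le> -1"
    and "N \<ge> 1"
  shows "symmetric_mat N (Htilde \<alpha> \<beta> \<gamma>) \<and> psd_mat N (Htilde \<alpha> \<beta> \<gamma>)"
proof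
  show "symmetric_mat N (Htilde \<alpha> \<beta> \<gamma>)"
    unfolding symmetric_mat_def Htilde_def by (simp add: add.commute)
  have d: "\<gamma> - \<alpha> + 1 > 0" using assms(4) by linarith
  have g: "Gamma (\<gamma> - \<alpha> + 1) > 0" using d by (rule Gamma_real_pos)
  show "psd_mat N (Htilde \<alpha> \<beta> \<gamma>)"
    unfolding psd_mat_def
  proof
    fix x :: "nat \<Rightarrow> real"
    have q: "(\<Sum>j=1..N. \<Sum>k=1..N. x j * Beta (real (j+k) + (\<alpha>+\<beta>+1)) (\<gamma> - \<alpha> + 1) * x k) \<ge> 0"
      by (rule quad_nonneg) (use assms d in auto)
    have "(\<Sum>j=1..N. \<Sum>k=1..N. x j * Htilde \<alpha> \<beta> \<gamma> j k * x k)
       = (\<Sum>j=1..N. \<Sum>k=1..N. x j * Beta (real (j+k) + (\<alpha>+\<beta>+1)) (\<gamma> - \<alpha> + 1) * x k) / Gamma (\<gamma> - \<alpha> + 1)"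
      unfolding Htilde_Beta[OF d] sum_divide_distrib by (simp add: mult_ac)
    also have "\<dots> \<ge> 0" using q g by simp
    finally show "(\<Sum>j=1..N. \<Sum>k=1..N. x j * Htilde \<alpha> \<beta> \<gamma> j k * x k) \<ge> 0" .
  qed
qed

end
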